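(* Consider the $(1,\lambda)$-CSA-ES with cumulation ($0<c<1$), any $\lambda\ge1$, $d_\sigma>0$, applied to $f(x)=[x]_1$ on $\mathbb{R}^n$. The Markov chain $([p_t]_1)_{t\in\mathbb{N}}$ is positive Harris recurrent with an invariant probability measure $\mu_{path}$, and the function $x\mapsto x^2$ is $\mu_{path}$-integrable.
   Context: For $x\in\mathbb{R}^n$, $[x]_i$ denotes its $i$-th coordinate. The $(1,\lambda)$-CSA-ES with parameters $\lambda\ge1$, $0<c\le1$, $d_\sigma>0$, minimizing $f:\mathbb{R}^n\to\mathbb{R}$: start from $X_0\in\mathbb{R}^n$, $\sigma_0>0$, $p_0\sim\mathcal{N}(0,I_n)$; at iteration $t$ draw $\xi_{t,1},\ldots,\xi_{t,\lambda}$ i.i.d. $\sim\mathcal{N}(0,I_n)$ independent of the past, children $Y_{t,i}=X_t+\sigma_t\xi_{t,i}$; $X_{t+1}$ is the child with smallest $f$-value and $\xi^\star_t$ the corresponding $\xi_{t,i}$ (so $X_{t+1}=X_t+\sigma_t\xi^\star_t$); path $p_{t+1}=(1-c)p_t+\sqrt{c(2-c)}\,\xi^\star_t$; step-size $\sigma_{t+1}=\sigma_t\exp(\frac{c}{2d_\sigma}(\|p_{t+1}\|^2/n-1))$. On $f(x)=[x]_1$, $([p_t]_1)_t$ satisfies $[p_{t+1}]_1=(1-c)[p_t]_1+\sqrt{c(2-c)}[\xi^\star_t]_1$ with $([\xi^\star_t]_1)_t$ i.i.d., each distributed as the minimum of $\lambda$ i.i.d. standard normals, so it is a Markov chain on $\mathbb{R}$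 with transition kernel $P$. A probability measure $\pi$ is invariant if $\pi(A)=\int P(x,A)\pi(dx)$ for all Borel $A$. The chain is positive Harris recurrent if it is $\varphi$-irreducible for some nonzero measure $\varphi$ (every Borel $A$ with $\varphi(A)>0$ is reached in finitely many steps with positive probability from every starting point), admits an invariant probability measure, and for every Borel $A$ with $\varphi(A)>0$ visits $A$ infinitely often with probability one from every starting point. *)

theory Defs
  imports "HOL-Probability.Probability"
begin

definition std_normal :: "real measure" where
  "std_normal = density lborel (\<lambda>x. ennreal (std_normal_density x))"

text \<open>Law of the minimum of lam i.i.d. standard normal variables
  (the law of the first coordinate of the selected step on f(x) = [x]_1).\<close>
definition min_normal :: "nat \<Rightarrow> real measure" where
  "min_normal lam =
     distr (PiM {..<lam} (\<lambda>_. std_normal)) borel (\<lambda>v. Min (v ` {..<lam}))"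

definition noise_space :: "nat \<Rightarrow> (nat \<Rightarrow> real) measure" where
  "noise_space lam = PiM UNIV (\<lambda>_::nat. min_normal lam)"

fun path_chain :: "real \<Rightarrow> nat \<Rightarrow> real \<Rightarrow> (nat \<Rightarrow> real) \<Rightarrow> nat \<Rightarrow> real" where
  "path_chain c lam x w 0 = x"
| "path_chain c lam x w (Suc t) = (1 - c) * path_chain c lam x w t + sqrt (c * (2 - c)) * w t"

definition path_kernel :: "real \<Rightarrow> nat \<Rightarrow> real \<Rightarrow> real measure" where
  "path_kernel c lam x =
     distr (min_normal lam) borel (\<lambda>z. (1 - c) * x + sqrt (c * (2 - c)) * z)"

definition is_invariant_prob :: "real \<Rightarrow> nat \<Rightarrow> real measure \<Rightarrow> bool" where
  "is_invariant_prob c lam \<pi> \<longleftrightarrow>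
     prob_space \<pi> \<and> sets \<pi> = sets borel \<and>
     (\<forall>A \<in> sets borel. emeasure \<pi> A = (\<integral>\<^sup>+ x. emeasure (path_kernel c lam x) A \<partial>\<pi>))"

definition phi_irreducible :: "real \<Rightarrow> nat \<Rightarrow> real measure \<Rightarrow> bool" where
  "phi_irreducible c lam \<phi> \<longleftrightarrow>
     sets \<phi> = sets borel \<and> emeasure \<phi> (space \<phi>) \<noteq> 0 \<and>
     (\<forall>A \<in> sets borel. emeasure \<phi> A > 0 \<longrightarrow>
        (\<forall>x. \<exists>t\<ge>1. measure (noise_space lam)
               {w \<in> space (noise_space lam). path_chain c lam x w t \<in> A} > 0))"

definition positive_harris_recurrent :: "real \<Rightarrow> nat \<Rightarrow> bool" where
  "positive_harris_recurrent c lam \<longleftrightarrow>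
     (\<exists>\<phi>. phi_irreducible c lam \<phi> \<and>
        (\<exists>\<pi>. is_invariant_prob c lam \<pi>) \<and>
        (\<forall>A \<in> sets borel. emeasure \<phi> A > 0 \<longrightarrow>
           (\<forall>x. AE w in noise_space lam. (\<exists>\<^sub>\<infinity>t. path_chain c lam x w t \<in> A))))"

end

theory Submission
  imports Defs
begin
lemma prob_std_normal: "prob_space std_normal"
  unfolding std_normal_def by (rule prob_space_normal_density) simp

lemma sets_std_normal[simp, measurable_cong]: "sets std_normal = sets borel"
  unfolding std_normal_def by simp

lemma space_std_normal[simp]: "space std_normal = UNIV"
  unfolding std_normal_def by simp

lemma std_normal_density_mono:
  assumes "\<bar>x\<bar> \<le> K" shows "std_normal_density K \<le> std_normal_density x"
proof -
  have "x^2 \<le> K^2" using assms by (metis abs_le_square_iff abs_of_nonneg abs_ge_zero order.trans power2_abs)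
  then show ?thesis unfolding std_normal_density_def
    by (intro mult_left_mono) auto
qed

lemma std_normal_lb:
  assumes S: "S \<in> sets borel" and sub: "S \<subseteq> {-K..K}"
  shows "ennreal (std_normal_density K) * emeasure lborel S \<le> emeasure std_normal S"
proof -
  have "ennreal (std_normal_density K) * emeasure lborel S = (\<integral>\<^sup>+ x. ennreal (std_normal_density K) * indicator S x \<partial>lborel)"
    using S by (simp add: nn_integral_cmult_indicator)
  also have "\<dots> \<le> (\<integral>\<^sup>+ x. ennreal (std_normal_density x) * indicator S x \<partial>lborel)"
    using sub by (intro nn_integral_mono) (auto simp: indicator_def subset_iff intro!: std_normal_density_mono)
  also have "\<dots> = emeasure std_normal S"
    unfolding std_normal_def using S by (simp add: emeasure_density)
  finally show ?thesis .
qed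

lemma std_normal_tail_pos: "0 < measure std_normal {K<..}"
proof -
  interpret prob_space std_normal by (rule prob_std_normal)
  have "ennreal (std_normal_density (\<bar>K\<bar>+1)) * emeasure lborel {K<..K+1} \<le> emeasure std_normal {K<..K+1}"
    by (rule std_normal_lb) auto
  also have "\<dots> \<le> emeasure std_normal {K<..}"
    by (intro emeasure_mono) auto
  finally have "0 < emeasure std_normal {K<..}"
    using normal_density_pos[of 1 0 "\<bar>K\<bar>+1"] by (auto simp: ennreal_mult_less_top not_le[symmetric] order.strict_iff_order)
  then show ?thesis by (simp add: emeasure_eq_measure)
qed

lemma product_prob_std: "product_prob_space (\<lambda>_::nat. std_normal)"
  by (intro product_prob_spaceI prob_std_normal)

lemma meas_Min[measurable]: "(\<lambda>v::nat\<Rightarrow>real. Min (v ` {..<lam})) \<in> borel_measurable (PiM {..<lam} (\<lambda>_. std_normal))"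
proof -
  have "(\<lambda>v::nat\<Rightarrow>real. Min ((\<lambda>i. v i) ` {..<lam})) \<in> borel_measurable (PiM {..<lam} (\<lambda>_. std_normal))"
    by measurable
  then show ?thesis by simp
qed

lemma prob_min_normal: "prob_space (min_normal lam)"
proof -
  interpret product_prob_space "\<lambda>_::nat. std_normal" "{..<lam}" by (rule product_prob_std)
  interpret P: prob_space "PiM {..<lam} (\<lambda>_. std_normal)" by (intro prob_space_PiM prob_std_normal)
  show ?thesis unfolding min_normal_def by (rule P.prob_space_distr) simp
qed

lemma sets_min_normal[simp, measurable_cong]: "sets (min_normal lam) = sets borel"
  unfolding min_normal_def by simp

lemma space_min_normal[simp]: "space (min_normal lam) = UNIV"
  unfolding min_normal_def by simp

lemma min_normal_lb:
  assumes lam: "1 \<le> lam" and B: "B \<in> sets borel"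
  shows "ennreal (std_normal_density K * measure std_normal {K<..} ^ (lam - 1)) * emeasure lborel (B \<inter> {-K..K})
     \<le> emeasure (min_normal lam) B"
proof -
  interpret product_prob_space "\<lambda>_::nat. std_normal" "{..<lam}" by (rule product_prob_std)
  define F where "F = (\<lambda>i::nat. if i = 0 then B \<inter> {-K..K} else {K<..})"
  have Fs: "F i \<in> sets std_normal" for i using B by (auto simp: F_def)
  have sub: "Pi\<^sub>E {..<lam} F \<subseteq> {v \<in> space (PiM {..<lam} (\<lambda>_. std_normal)). Min (v ` {..<lam}) \<in> B}"
  proof
    fix v assume v: "v \<in> Pi\<^sub>E {..<lam} F"
    have "v 0 \<in> F 0" using v lam by (auto simp: PiE_iff)
    then have v0: "v 0 \<in> B \<inter> {-K..K}" by (simp add: F_def)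
    have "Min (v ` {..<lam}) = v 0"
    proof (rule Min_eqI)
      show "v 0 \<in> v ` {..<lam}" using lam by auto
      fix y assume "y \<in> v ` {..<lam}"
      then obtain i where i: "i < lam" "y = v i" by auto
      show "v 0 \<le> y"
      proof (cases "i = 0")
        case False
        have "v i \<in> F i" using v i by (auto simp: PiE_iff)
        then have "v i > K" using False by (simp add: F_def)
        then show ?thesis using v0 i by auto
      qed (use i in auto)
    qed simp
    then show "v \<in> {v \<in> space (PiM {..<lam} (\<lambda>_. std_normal)). Min (v ` {..<lam}) \<in> B}"
      using v v0 by (auto simp: space_PiM PiE_iff)
  qed
  obtain m where m: "lam = Suc m" using lam by (cases lam) auto
  have "ennreal (std_normal_density K * measure std_normal {K<..} ^ (lam - 1)) * emeasure lborel (B \<inter> {-K..K})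
     = (ennreal (std_normal_density K) * emeasure lborel (B \<inter> {-K..K})) * ennreal (measure std_normal {K<..}) ^ m"
    using m by (simp add: ennreal_mult' ennreal_power mult_ac)
  also have "\<dots> \<le> emeasure std_normal (B \<inter> {-K..K}) * emeasure std_normal {K<..} ^ m"
    using B by (intro mult_mono std_normal_lb) (auto simp: M.emeasure_eq_measure)
  also have "\<dots> = (\<Prod>i<lam. emeasure std_normal (F i))"
    unfolding m prod.lessThan_Suc_shift by (simp add: F_def)
  also have "\<dots> = emeasure (PiM {..<lam} (\<lambda>_. std_normal)) (Pi\<^sub>E {..<lam} F)"
    using Fs by (intro emeasure_PiM[symmetric]) auto
  also have "\<dots> \<le> emeasure (PiM {..<lam} (\<lambda>_. std_normal)) {v \<in> space (PiM {..<lam} (\<lambda>_. std_normal)). Min (v ` {..<lam}) \<in> B}"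
    using sub B by (intro emeasure_mono) auto
  also have "\<dots> = emeasure (min_normal lam) B"
    unfolding min_normal_def using B by (subst emeasure_distr) (auto simp: vimage_def Int_def conj_commute)
  finally show ?thesis .
qed

lemma std_normal_m2: "(\<integral>\<^sup>+ x. ennreal (x^2) \<partial>std_normal) < \<infinity>"
proof -
  have "integrable lborel (\<lambda>x. std_normal_density x * x^2)"
    by (rule integrable_std_normal_moment)
  then have "(\<integral>\<^sup>+ x. ennreal (norm (std_normal_density x * x^2)) \<partial>lborel) < \<infinity>"
    by (simp add: integrable_iff_bounded)
  moreover have "(\<integral>\<^sup>+ x. ennreal (x^2) \<partial>std_normal) = (\<integral>\<^sup>+ x. ennreal (norm (std_normal_density x * x^2)) \<partial>lborel)"
    unfolding std_normal_def
    by (subst nn_integral_density) (auto simp: ennreal_mult' intro!: nn_integral_cong)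
  ultimately show ?thesis by simp
qed

lemma min_normal_m2:
  assumes lam: "1 \<le> lam"
  shows "(\<integral>\<^sup>+ z. ennreal (z^2) \<partial>min_normal lam) < \<infinity>"
proof -
  interpret product_prob_space "\<lambda>_::nat. std_normal" "{..<lam}" by (rule product_prob_std)
  have comp: "(\<integral>\<^sup>+ v. ennreal ((v i)^2) \<partial>PiM {..<lam} (\<lambda>_. std_normal)) = (\<integral>\<^sup>+ x. ennreal (x^2) \<partial>std_normal)"
    if "i < lam" for i
  proof -
    have "(\<integral>\<^sup>+ x. ennreal (x^2) \<partial>std_normal) = (\<integral>\<^sup>+ x. ennreal (x^2) \<partial>distr (PiM {..<lam} (\<lambda>_. std_normal)) std_normal (\<lambda>v. v i))"
      using PiM_component[of i] that by simp
    also have "\<dots> = (\<integral>\<^sup>+ v. ennreal ((v i)^2) \<partial>PiM {..<lam} (\<lambda>_. std_normal))"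
      using that by (subst nn_integral_distr) auto
    finally show ?thesis by simp
  qed
  have "(\<integral>\<^sup>+ z. ennreal (z^2) \<partial>min_normal lam) = (\<integral>\<^sup>+ v. ennreal ((Min (v ` {..<lam}))^2) \<partial>PiM {..<lam} (\<lambda>_. std_normal))"
    unfolding min_normal_def by (subst nn_integral_distr) auto
  also have "\<dots> \<le> (\<integral>\<^sup>+ v. (\<Sum>i<lam. ennreal ((v i)^2)) \<partial>PiM {..<lam} (\<lambda>_. std_normal))"
  proof (intro nn_integral_mono)
    fix v :: "nat \<Rightarrow> real"
    have "Min (v ` {..<lam}) \<in> v ` {..<lam}" using lam by (intro Min_in) (auto simp: lessThan_empty_iff)
    then obtain j where j: "j < lam" "Min (v ` {..<lam}) = v j" by auto
    have "ennreal ((v j)^2) \<le> (\<Sum>i<lam. ennreal ((v i)^2))"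
      using j by (intro member_le_sum) auto
    then show "ennreal ((Min (v ` {..<lam}))^2) \<le> (\<Sum>i<lam. ennreal ((v i)^2))" using j by simp
  qed
  also have "\<dots> = (\<Sum>i<lam. (\<integral>\<^sup>+ v. ennreal ((v i)^2) \<partial>PiM {..<lam} (\<lambda>_. std_normal)))"
    by (intro nn_integral_sum) auto
  also have "\<dots> = (\<Sum>i<lam. (\<integral>\<^sup>+ x. ennreal (x^2) \<partial>std_normal))"
    by (intro sum.cong comp) auto
  also have "\<dots> < \<infinity>"
    using std_normal_m2 by (simp add: ennreal_mult_less_top of_nat_less_top)
  finally show ?thesis .
qed

locale csa =
  fixes c :: real and lam :: nat
  assumes c0: "0 < c" and c1: "c < 1" and lam1: "1 \<le> lam"
begin

abbreviation "\<mu> \<equiv> min_normal lam"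
abbreviation "N \<equiv> noise_space lam"
abbreviation "X \<equiv> path_chain c lam"
abbreviation "r \<equiv> 1 - c"
abbreviation "s \<equiv> sqrt (c * (2 - c))"

lemma s_pos: "0 < s" using c0 c1 by simp
lemma r_pos: "0 < r" using c1 by simp
lemma r_lt1: "r < 1" using c0 by simp

sublocale SQ: sequence_space \<mu>
  by (intro sequence_space.intro product_prob_spaceI prob_min_normal)

lemma N_def': "N = PiM UNIV (\<lambda>_. \<mu>)" by (simp add: noise_space_def)

lemma space_N[simp]: "space N = UNIV"
  by (simp add: N_def' space_PiM)

lemma prob_N: "prob_space N" unfolding N_def' by (rule SQ.P.prob_space_axioms)

lemma sets_N_cong[measurable_cong]: "sets N = sets (PiM UNIV (\<lambda>_. \<mu>))" by (simp add: N_def')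

lemma meas_comp[measurable]: "(\<lambda>w. w i) \<in> borel_measurable N"
  unfolding N_def' by measurable

lemma meas_X[measurable]: "(\<lambda>p. X (fst p) (snd p) t) \<in> borel_measurable (borel \<Otimes>\<^sub>M N)"
proof (induction t)
  case 0 then show ?case by simp
next
  case (Suc t)
  have h1: "(\<lambda>p. snd p t) \<in> borel_measurable (borel \<Otimes>\<^sub>M N)"
    by measurable
  have eq: "(\<lambda>p. X (fst p) (snd p) (Suc t)) = (\<lambda>p. r * X (fst p) (snd p) t + s * snd p t)"
    by simp
  show ?case unfolding eq
    by (rule borel_measurable_add[OF borel_measurable_times[OF borel_measurable_const Suc] borel_measurable_times[OF borel_measurable_const h1]])
qed

lemma meas_X1[measurable]: "(\<lambda>w. X y w t) \<in> borel_measurable N"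
  using measurable_Pair2[OF meas_X, of y] by simp

lemma meas_shift[measurable]: "(\<lambda>w i. w (i + m)) \<in> measurable N N"
  unfolding N_def' by (rule measurable_PiM_single') (auto simp: space_PiM)

lemma N_component:
  assumes [measurable]: "f \<in> borel_measurable borel"
  shows "(\<integral>\<^sup>+ w. f (w n) \<partial>N) = (\<integral>\<^sup>+ z. f z \<partial>\<mu>)"
proof -
  have m1: "(\<lambda>w. w n) \<in> measurable N \<mu>" unfolding N_def' by (rule measurable_component_singleton) simp
  have m2: "f \<in> borel_measurable \<mu>" using assms by (simp add: measurable_cong_sets[OF sets_min_normal refl])
  have "(\<integral>\<^sup>+ z. f z \<partial>\<mu>) = (\<integral>\<^sup>+ z. f z \<partial>distr N \<mu> (\<lambda>w. w n))"
    using SQ.PiM_component[of n] by (simp add: N_def')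
  also have "\<dots> = (\<integral>\<^sup>+ w. f (w n) \<partial>N)"
    by (rule nn_integral_distr[OF m1]) (simp add: measurable_cong_sets[OF sets_distr refl] m2)
  finally show ?thesis by simp
qed

lemma meas_case_nat[measurable]: "(\<lambda>p. case_nat (fst p) (snd p)) \<in> measurable (\<mu> \<Otimes>\<^sub>M N) N"
  unfolding N_def' by measurable

lemma N_iter:
  assumes f[measurable]: "f \<in> borel_measurable N"
  shows "(\<integral>\<^sup>+ w. f w \<partial>N) = (\<integral>\<^sup>+ a. \<integral>\<^sup>+ w. f (case_nat a w) \<partial>N \<partial>\<mu>)"
proof -
  interpret NP: prob_space N by (rule prob_N)
  have eqm: "distr (\<mu> \<Otimes>\<^sub>M N) N (\<lambda>p. case_nat (fst p) (snd p)) = N"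
    using SQ.PiM_iter by (simp add: N_def' split_beta')
  have "(\<integral>\<^sup>+ w. f w \<partial>N) = (\<integral>\<^sup>+ w. f w \<partial>distr (\<mu> \<Otimes>\<^sub>M N) N (\<lambda>p. case_nat (fst p) (snd p)))"
    by (simp only: eqm)
  also have "\<dots> = (\<integral>\<^sup>+ p. f (case_nat (fst p) (snd p)) \<partial>(\<mu> \<Otimes>\<^sub>M N))"
    by (rule nn_integral_distr[OF meas_case_nat]) (simp add: measurable_cong_sets[OF sets_distr refl] f)
  also have "\<dots> = (\<integral>\<^sup>+ a. \<integral>\<^sup>+ w. f (case_nat a w) \<partial>N \<partial>\<mu>)"
    using NP.nn_integral_fst[of "\<lambda>p. f (case_nat (fst p) (snd p))" \<mu>]
    by (simp add: measurable_compose[OF meas_case_nat f])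
  finally show ?thesis .
qed

lemma X_add: "X y w (t + m) = X (X y w m) (\<lambda>i. w (i + m)) t"
  by (induction t) auto

lemma X_prefix: "(\<And>i. i < m \<Longrightarrow> w i = w' i) \<Longrightarrow> X y w m = X y w' m"
  by (induction m) auto

lemma meas_comb[measurable]: "(\<lambda>p. comb_seq m (fst p) (snd p)) \<in> measurable (N \<Otimes>\<^sub>M N) N"
  unfolding N_def' by (rule measurable_comb_seq'[OF measurable_fst measurable_snd])

lemma markov:
  assumes g[measurable]: "g \<in> borel_measurable (borel \<Otimes>\<^sub>M N)"
  shows "(\<integral>\<^sup>+ w. g (X y w m, \<lambda>i. w (i + m)) \<partial>N) = (\<integral>\<^sup>+ w. \<integral>\<^sup>+ w'. g (X y w m, w') \<partial>N \<partial>N)"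
proof -
  interpret NP: prob_space N by (rule prob_N)
  have eqm: "distr (N \<Otimes>\<^sub>M N) N (\<lambda>p. comb_seq m (fst p) (snd p)) = N"
    using SQ.PiM_comb_seq[of m] by (simp add: N_def' split_beta')
  have hm: "(\<lambda>w. g (X y w m, \<lambda>i. w (i + m))) \<in> borel_measurable N"
    using measurable_compose[OF measurable_Pair[OF meas_X1 meas_shift] g] .
  have "(\<integral>\<^sup>+ w. g (X y w m, \<lambda>i. w (i + m)) \<partial>N) =
        (\<integral>\<^sup>+ w. g (X y w m, \<lambda>i. w (i + m)) \<partial>distr (N \<Otimes>\<^sub>M N) N (\<lambda>p. comb_seq m (fst p) (snd p)))"
    by (simp only: eqm)
  also have "\<dots> = (\<integral>\<^sup>+ p. g (X y (comb_seq m (fst p) (snd p)) m, \<lambda>i. comb_seq m (fst p) (snd p) (i + m)) \<partial>(N \<Otimes>\<^sub>M N))"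
    by (rule nn_integral_distr[OF meas_comb]) (simp add: measurable_cong_sets[OF sets_distr refl] hm)
  also have "\<dots> = (\<integral>\<^sup>+ p. g (X y (fst p) m, snd p) \<partial>(N \<Otimes>\<^sub>M N))"
  proof (intro nn_integral_cong)
    fix p :: "(nat \<Rightarrow> real) \<times> (nat \<Rightarrow> real)"
    have "X y (comb_seq m (fst p) (snd p)) m = X y (fst p) m"
      by (intro X_prefix) (simp add: comb_seq_less)
    moreover have "(\<lambda>i. comb_seq m (fst p) (snd p) (i + m)) = snd p"
      by (simp add: comb_seq_add)
    ultimately show "g (X y (comb_seq m (fst p) (snd p)) m, \<lambda>i. comb_seq m (fst p) (snd p) (i + m)) = g (X y (fst p) m, snd p)"
      by simp
  qed
  also have "\<dots> = (\<integral>\<^sup>+ w. \<integral>\<^sup>+ w'. g (X y w m, w') \<partial>N \<partial>N)"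
  proof -
    have pm: "(\<lambda>p. g (X y (fst p) m, snd p)) \<in> borel_measurable (N \<Otimes>\<^sub>M N)"
      using measurable_compose[OF measurable_Pair[OF measurable_compose[OF measurable_fst meas_X1] measurable_snd] g] .
    have e: "(\<integral>\<^sup>+ w. \<integral>\<^sup>+ w'. g (X y w m, w') \<partial>N \<partial>N) = (\<integral>\<^sup>+ p. g (X y (fst p) m, snd p) \<partial>(N \<Otimes>\<^sub>M N))"
      using NP.nn_integral_fst[OF pm] by (simp only: fst_conv snd_conv)
    show ?thesis using e by (rule sym)
  qed
  finally show ?thesis .
qed

end

context csa begin

lemma meas_sq_enn: "(\<lambda>z::real. ennreal (z^2)) \<in> borel_measurable borel" by measurable

lemma mu_space1: "emeasure \<mu> UNIV = 1"
  using prob_space.emeasure_space_1[OF prob_min_normal, of lam] by simp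

definition "M2 = (\<integral>\<^sup>+ z. ennreal (z^2) \<partial>\<mu>)"
definition "m1 = enn2real (\<integral>\<^sup>+ z. ennreal \<bar>z\<bar> \<partial>\<mu>)"

lemma M2_fin: "M2 < \<infinity>" unfolding M2_def by (rule min_normal_m2[OF lam1])

lemma m1_eq: "(\<integral>\<^sup>+ z. ennreal \<bar>z\<bar> \<partial>\<mu>) = ennreal m1"
proof -
  have "(\<integral>\<^sup>+ z. ennreal \<bar>z\<bar> \<partial>\<mu>) \<le> (\<integral>\<^sup>+ z. 1 + ennreal (z^2) \<partial>\<mu>)"
  proof (intro nn_integral_mono)
    fix z :: real
    have "\<bar>z\<bar> \<le> 1 + z^2"
    proof (cases "\<bar>z\<bar> \<le> 1")
      case True then show ?thesis by (simp add: add_increasing2)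
    next
      case False then have "\<bar>z\<bar> * 1 \<le> \<bar>z\<bar> * \<bar>z\<bar>" by (intro mult_left_mono) auto
      then show ?thesis by (simp add: power2_eq_square)
    qed
    then show "ennreal \<bar>z\<bar> \<le> 1 + ennreal (z^2)"
      by (metis ennreal_le_iff ennreal_plus ennreal_1 zero_le_one zero_le_power2 add_nonneg_nonneg)
  qed
  also have "\<dots> = 1 + M2"
  proof -
    have mz: "(\<lambda>z::real. ennreal (z^2)) \<in> borel_measurable \<mu>"
      unfolding measurable_cong_sets[OF sets_min_normal refl] by (rule meas_sq_enn)
    have one: "(\<integral>\<^sup>+ z. 1 \<partial>\<mu>) = 1"
      by (subst nn_integral_const) (simp add: mu_space1)
    show ?thesis unfolding M2_def
      by (subst nn_integral_add[OF borel_measurable_const mz]) (simp only: one)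
  qed
  also have "\<dots> < \<infinity>" using M2_fin by simp
  finally show ?thesis unfolding m1_def by (simp add: less_top)
qed

lemma m1_nonneg: "0 \<le> m1" unfolding m1_def by simp

lemma meas_abs_enn: "(\<lambda>z::real. ennreal \<bar>z\<bar>) \<in> borel_measurable borel" by measurable

lemma E_abs_X:
  "(\<integral>\<^sup>+ w. ennreal \<bar>X y w n\<bar> \<partial>N) \<le> ennreal (r^n * \<bar>y\<bar> + s * m1 / c)"
proof (induction n)
  case 0
  interpret NP: prob_space N by (rule prob_N)
  have "s * m1 / c \<ge> 0" using m1_nonneg c0 s_pos by (intro divide_nonneg_pos mult_nonneg_nonneg) auto
  then show ?case using NP.emeasure_space_1 by (simp add: ennreal_plus[symmetric] del: ennreal_plus)
next
  case (Suc n)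
  have "(\<integral>\<^sup>+ w. ennreal \<bar>X y w (Suc n)\<bar> \<partial>N) \<le> (\<integral>\<^sup>+ w. ennreal r * ennreal \<bar>X y w n\<bar> + ennreal s * ennreal \<bar>w n\<bar> \<partial>N)"
  proof (intro nn_integral_mono)
    fix w :: "nat \<Rightarrow> real"
    have "\<bar>X y w (Suc n)\<bar> \<le> r * \<bar>X y w n\<bar> + s * \<bar>w n\<bar>"
      using r_pos s_pos by (simp add: abs_triangle_ineq[THEN order_trans] abs_mult)
    then show "ennreal \<bar>X y w (Suc n)\<bar> \<le> ennreal r * ennreal \<bar>X y w n\<bar> + ennreal s * ennreal \<bar>w n\<bar>"
      using r_pos s_pos by (simp add: ennreal_mult'[symmetric] ennreal_plus[symmetric] del: ennreal_plus)
  qed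
  also have "\<dots> = ennreal r * (\<integral>\<^sup>+ w. ennreal \<bar>X y w n\<bar> \<partial>N) + ennreal s * (\<integral>\<^sup>+ w. ennreal \<bar>w n\<bar> \<partial>N)"
  proof -
    have mX[measurable]: "(\<lambda>w. ennreal \<bar>X y w n\<bar>) \<in> borel_measurable N"
      using measurable_compose[OF meas_X1 meas_abs_enn] .
    have mW[measurable]: "(\<lambda>w. ennreal \<bar>w n\<bar>) \<in> borel_measurable N"
      using measurable_compose[OF meas_comp meas_abs_enn] .
    have m1': "(\<lambda>w. ennreal r * ennreal \<bar>X y w n\<bar>) \<in> borel_measurable N"
      by (rule borel_measurable_times_ennreal[OF borel_measurable_const mX])
    have m2': "(\<lambda>w. ennreal s * ennreal \<bar>w n\<bar>) \<in> borel_measurable N"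
      by (rule borel_measurable_times_ennreal[OF borel_measurable_const mW])
    show ?thesis
      by (subst nn_integral_add[OF m1' m2']) (simp add: nn_integral_cmult[OF mX] nn_integral_cmult[OF mW])
  qed
  also have "(\<integral>\<^sup>+ w. ennreal \<bar>w n\<bar> \<partial>N) = ennreal m1"
    using N_component[OF meas_abs_enn, of n] m1_eq by simp
  also have "ennreal r * (\<integral>\<^sup>+ w. ennreal \<bar>X y w n\<bar> \<partial>N) + ennreal s * ennreal m1
      \<le> ennreal r * ennreal (r^n * \<bar>y\<bar> + s * m1 / c) + ennreal s * ennreal m1"
    by (intro add_mono mult_left_mono Suc.IH) auto
  also have "\<dots> = ennreal (r^Suc n * \<bar>y\<bar> + s * m1 / c)"
  proof -
    have "r * (r^n * \<bar>y\<bar> + s * m1 / c) + s * m1 = r^Suc n * \<bar>y\<bar> + s * m1 / c"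
      using c0 by (simp add: field_simps)
    moreover have "0 \<le> r^n * \<bar>y\<bar> + s * m1 / c" using r_pos s_pos m1_nonneg c0 by simp
    ultimately show ?thesis using r_pos s_pos m1_nonneg
      by (simp add: ennreal_mult'[symmetric] ennreal_plus[symmetric] del: ennreal_plus)
  qed
  finally show ?case .
qed

end

context csa begin

lemma meas_abs_X: "(\<lambda>w. \<bar>X y w n\<bar>) \<in> borel_measurable N"
  by (rule borel_measurable_abs[OF meas_X1])

lemma tail_bound:
  assumes R: "0 < R"
  shows "emeasure N {w. R < \<bar>X y w n\<bar>} \<le> ennreal ((r^n * \<bar>y\<bar> + s * m1 / c) / R)"
proof -
  define S where "S = {w. R < \<bar>X y w n\<bar>}"
  have S: "S \<in> sets N"
    using measurable_sets[OF meas_abs_X, of "{R<..}" y n] by (simp add: S_def vimage_def)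
  have "emeasure N S = (\<integral>\<^sup>+ w. indicator S w \<partial>N)"
    using S by simp
  also have "\<dots> \<le> (\<integral>\<^sup>+ w. ennreal (1/R) * ennreal \<bar>X y w n\<bar> \<partial>N)"
  proof (intro nn_integral_mono)
    fix w
    show "indicator S w \<le> ennreal (1/R) * ennreal \<bar>X y w n\<bar>"
    proof (cases "w \<in> S")
      case True
      then have "1 \<le> (1/R) * \<bar>X y w n\<bar>" using R by (simp add: S_def field_simps)
      then have "ennreal 1 \<le> ennreal ((1/R) * \<bar>X y w n\<bar>)" by (rule ennreal_leI)
      also have "ennreal ((1/R) * \<bar>X y w n\<bar>) = ennreal (1/R) * ennreal \<bar>X y w n\<bar>"
        using R by (intro ennreal_mult) auto
      finally show ?thesis using True by simp
    qed simp
  qed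
  also have "\<dots> = ennreal (1/R) * (\<integral>\<^sup>+ w. ennreal \<bar>X y w n\<bar> \<partial>N)"
    by (rule nn_integral_cmult[OF measurable_compose[OF meas_X1 meas_abs_enn]])
  also have "\<dots> \<le> ennreal (1/R) * ennreal (r^n * \<bar>y\<bar> + s * m1 / c)"
    by (intro mult_left_mono E_abs_X) auto
  also have "\<dots> = ennreal ((r^n * \<bar>y\<bar> + s * m1 / c) / R)"
    using R by (simp add: ennreal_mult'[symmetric])
  finally show ?thesis unfolding S_def .
qed

definition kappa :: "real \<Rightarrow> real" where
  "kappa K = std_normal_density K * measure std_normal {K<..} ^ (lam - 1)"

lemma kappa_pos: "0 < kappa K"
  unfolding kappa_def using std_normal_tail_pos[of K] normal_density_pos[of 1 0 K] by simp

lemma meas_aff: "(\<lambda>a::real. u + v * a) \<in> borel_measurable borel" by measurable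

lemma minor:
  assumes A: "A \<in> sets borel" and y: "\<bar>y\<bar> \<le> R"
  shows "ennreal (kappa ((1+R)/s)) * emeasure lborel (A \<inter> {0..1}) \<le> ennreal s * emeasure \<mu> {a. r*y + s*a \<in> A}"
proof -
  define K where "K = (1+R)/s"
  define B where "B = {a. r*y + s*a \<in> A}"
  define T where "T = {a. r*y + s*a \<in> A \<inter> {0..1}}"
  have Bs: "B \<in> sets borel"
    using measurable_sets[OF meas_aff[of "r*y" s] A] by (simp add: B_def vimage_def)
  have Ts: "T \<in> sets borel"
    using measurable_sets[OF meas_aff[of "r*y" s], of "A \<inter> {0..1}"] A by (simp add: T_def vimage_def)
  have ry: "r*y \<le> R" "-(r*y) \<le> R"
  proof -
    have "\<bar>r*y\<bar> \<le> \<bar>y\<bar>" using r_pos r_lt1 by (simp add: abs_mult mult_left_le_one_le)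
    then show "r*y \<le> R" "-(r*y) \<le> R" using y by linarith+
  qed
  have TK: "T \<subseteq> B \<inter> {-K..K}"
  proof
    fix a assume "a \<in> T"
    then have a: "r*y + s*a \<in> A" "0 \<le> r*y + s*a" "r*y + s*a \<le> 1" by (auto simp: T_def)
    have "s*a \<le> 1 + R" "-(1+R) \<le> s*a" using a ry by linarith+
    then have "a \<le> K" "-K \<le> a" using s_pos unfolding K_def by (simp_all add: field_simps)
    then show "a \<in> B \<inter> {-K..K}" using a by (simp add: B_def)
  qed
  have aff: "lborel = density (distr lborel borel (\<lambda>x. r*y + s*x)) (\<lambda>_. ennreal \<bar>s\<bar>)"
    by (rule lborel_real_affine) (use c0 c1 in simp)
  have "emeasure lborel (A \<inter> {0..1}) = emeasure (density (distr lborel borel (\<lambda>x. r*y + s*x)) (\<lambda>_. ennreal \<bar>s\<bar>)) (A \<inter> {0..1})"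
    using arg_cong[OF aff, of "\<lambda>M. emeasure M (A \<inter> {0..1})"] .
  also have "\<dots> = ennreal \<bar>s\<bar> * emeasure (distr lborel borel (\<lambda>x. r*y + s*x)) (A \<inter> {0..1})"
    using A by (intro emeasure_density_const) simp
  also have "\<dots> = ennreal s * emeasure lborel T"
    using A s_pos by (subst emeasure_distr) (auto simp: T_def vimage_def meas_aff)
  finally have eqT: "emeasure lborel (A \<inter> {0..1}) = ennreal s * emeasure lborel T" .
  have "ennreal (kappa K) * emeasure lborel (A \<inter> {0..1}) = ennreal s * (ennreal (kappa K) * emeasure lborel T)"
    unfolding eqT by (simp add: mult_ac)
  also have "\<dots> \<le> ennreal s * (ennreal (kappa K) * emeasure lborel (B \<inter> {-K..K}))"
    using TK Bs by (intro mult_left_mono emeasure_mono) auto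
  also have "\<dots> \<le> ennreal s * emeasure \<mu> B"
    using min_normal_lb[OF lam1 Bs, of K] unfolding kappa_def by (intro mult_left_mono) auto
  finally show ?thesis unfolding K_def B_def .
qed

end

context csa begin

lemma X1: "X y w (Suc 0) = r * y + s * w 0" by simp

lemma meas_ind_aff:
  fixes u v :: real
  assumes "A \<in> sets borel" shows "(\<lambda>z. indicator A (u + v * z) :: ennreal) \<in> borel_measurable borel"
  using measurable_compose[OF meas_aff[of u v] borel_measurable_indicator[OF assms]] .

lemma hit1:
  assumes A: "A \<in> sets borel"
  shows "emeasure N {w. X y w (Suc 0) \<in> A} = emeasure \<mu> {a. r*y + s*a \<in> A}"
proof -
  have S1: "{w. X y w (Suc 0) \<in> A} \<in> sets N"
    using measurable_sets[OF meas_X1 A, of y "Suc 0"] by (simp add: vimage_def)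
  have S2: "{a. r*y + s*a \<in> A} \<in> sets \<mu>"
    using measurable_sets[OF meas_aff[of "r*y" s] A] by (simp add: vimage_def)
  have "emeasure N {w. X y w (Suc 0) \<in> A} = (\<integral>\<^sup>+ w. indicator {w. X y w (Suc 0) \<in> A} w \<partial>N)"
    using S1 by simp
  also have "\<dots> = (\<integral>\<^sup>+ w. indicator A (r*y + s * w 0) \<partial>N)"
    by (intro nn_integral_cong) (simp add: indicator_def)
  also have "\<dots> = (\<integral>\<^sup>+ z. indicator A (r*y + s * z) \<partial>\<mu>)"
    by (rule N_component[OF meas_ind_aff[OF A]])
  also have "\<dots> = (\<integral>\<^sup>+ z. indicator {a. r*y + s*a \<in> A} z \<partial>\<mu>)"
    by (intro nn_integral_cong) (simp add: indicator_def)
  also have "\<dots> = emeasure \<mu> {a. r*y + s*a \<in> A}"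
    using S2 by simp
  finally show ?thesis .
qed

context
  fixes A :: "real set"
  assumes A: "A \<in> sets borel" and Apos: "0 < emeasure lborel (A \<inter> {0..1})"
begin

definition "lamA = measure lborel (A \<inter> {0..1})"
definition "eps R = kappa ((1+R)/s) * lamA / s"

lemma lamA: "emeasure lborel (A \<inter> {0..1}) = ennreal lamA" "0 < lamA"
proof -
  have "emeasure lborel (A \<inter> {0..1}) \<le> emeasure lborel {0..1::real}"
    using A by (intro emeasure_mono) auto
  then have "emeasure lborel (A \<inter> {0..1}) \<noteq> \<infinity>" by (auto simp: top_unique)
  then show e: "emeasure lborel (A \<inter> {0..1}) = ennreal lamA"
    unfolding lamA_def by (simp add: emeasure_eq_ennreal_measure)
  show "0 < lamA" using Apos e by simp
qed

lemma eps_pos: "0 < eps R"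
  unfolding eps_def using kappa_pos lamA(2) s_pos by simp

lemma hit1_lb:
  assumes y: "\<bar>y\<bar> \<le> R"
  shows "eps R \<le> measure N {w. X y w (Suc 0) \<in> A}"
proof -
  interpret NP: prob_space N by (rule prob_N)
  define P where "P = measure N {w. X y w (Suc 0) \<in> A}"
  have "ennreal (kappa ((1+R)/s) * lamA) = ennreal (kappa ((1+R)/s)) * ennreal lamA"
    using kappa_pos[of "(1+R)/s"] lamA(2) by (intro ennreal_mult) auto
  also have "\<dots> \<le> ennreal s * emeasure \<mu> {a. r*y + s*a \<in> A}"
    using minor[OF A y] lamA(1) by simp
  also have "emeasure \<mu> {a. r*y + s*a \<in> A} = ennreal P"
    unfolding P_def using hit1[OF A, of y] NP.emeasure_eq_measure by metis
  also have "ennreal s * ennreal P = ennreal (s * P)"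
    using s_pos by (intro ennreal_mult[symmetric]) (auto simp: P_def)
  finally have "kappa ((1+R)/s) * lamA \<le> s * P"
    using s_pos by (subst (asm) ennreal_le_iff) (auto simp: P_def)
  then show ?thesis unfolding eps_def P_def[symmetric] using s_pos by (simp add: field_simps)
qed

lemma eps_le1: "0 \<le> R \<Longrightarrow> eps R \<le> 1"
proof -
  interpret NP: prob_space N by (rule prob_N)
  assume "0 \<le> R"
  then have "eps R \<le> NP.prob {w. X 0 w (Suc 0) \<in> A}" using hit1_lb[of 0 R] by simp
  then show ?thesis using NP.prob_le_1 order_trans by blast
qed

end
end

context csa begin

context
  fixes A :: "real set"
  assumes A: "A \<in> sets borel" and Apos: "0 < emeasure lborel (A \<inter> {0..1})"
begin

definition J :: "(real \<times> (nat \<Rightarrow> real)) set" where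
  "J = {p. \<forall>t. X (fst p) (snd p) (Suc t) \<notin> A}"

lemma space_BN[simp]: "space (borel \<Otimes>\<^sub>M N) = UNIV"
  by (simp add: space_pair_measure)

lemma J_sets: "J \<in> sets (borel \<Otimes>\<^sub>M N)"
proof -
  have "{p \<in> space (borel \<Otimes>\<^sub>M N). \<forall>t. X (fst p) (snd p) (Suc t) \<notin> A} \<in> sets (borel \<Otimes>\<^sub>M N)"
  proof (rule sets.sets_Collect_countable_All)
    fix t
    have "(\<lambda>p. X (fst p) (snd p) (Suc t)) -` A \<inter> space (borel \<Otimes>\<^sub>M N) \<in> sets (borel \<Otimes>\<^sub>M N)"
      by (rule measurable_sets[OF meas_X A])
    then have "space (borel \<Otimes>\<^sub>M N) - ((\<lambda>p. X (fst p) (snd p) (Suc t)) -` A \<inter> space (borel \<Otimes>\<^sub>M N)) \<in> sets (borel \<Otimes>\<^sub>M N)"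
      by (rule sets.compl_sets)
    moreover have "space (borel \<Otimes>\<^sub>M N) - ((\<lambda>p. X (fst p) (snd p) (Suc t)) -` A \<inter> space (borel \<Otimes>\<^sub>M N))
        = {p \<in> space (borel \<Otimes>\<^sub>M N). X (fst p) (snd p) (Suc t) \<notin> A}" by auto
    ultimately show "{p \<in> space (borel \<Otimes>\<^sub>M N). X (fst p) (snd p) (Suc t) \<notin> A} \<in> sets (borel \<Otimes>\<^sub>M N)" by simp
  qed
  then show ?thesis by (simp add: J_def)
qed

definition H :: "real \<Rightarrow> ennreal" where
  "H y = (\<integral>\<^sup>+ w. indicator J (y, w) \<partial>N)"

lemma H_le1: "H y \<le> 1"
proof -
  interpret NP: prob_space N by (rule prob_N)
  have "H y \<le> (\<integral>\<^sup>+ w. 1 \<partial>N)" unfolding H_def by (intro nn_integral_mono) (simp add: indicator_def)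
  also have "\<dots> = 1" using NP.emeasure_space_1 by (subst nn_integral_const) simp
  finally show ?thesis .
qed

lemma J_ind_meas: "indicator J \<in> borel_measurable (borel \<Otimes>\<^sub>M N)"
  by (rule borel_measurable_indicator[OF J_sets])

lemma H_step: "H y \<le> (\<integral>\<^sup>+ w. H (X y w n) \<partial>N)"
proof -
  have "H y \<le> (\<integral>\<^sup>+ w. indicator J (X y w n, \<lambda>i. w (i + n)) \<partial>N)"
    unfolding H_def
  proof (intro nn_integral_mono)
    fix w
    show "indicator J (y, w) \<le> (indicator J (X y w n, \<lambda>i. w (i + n)) :: ennreal)"
    proof (cases "(y, w) \<in> J")
      case True
      have "(X y w n, \<lambda>i. w (i + n)) \<in> J"
        unfolding J_def
      proof (safe)
        fix t assume a: "X (fst (X y w n, \<lambda>i. w (i + n))) (snd (X y w n, \<lambda>i. w (i + n))) (Suc t) \<in> A"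
        have "X y w (Suc t + n) \<in> A" using a by (simp only: X_add fst_conv snd_conv)
        then have "X y w (Suc (t + n)) \<in> A" by (simp only: add_Suc)
        then show False using True by (simp add: J_def del: path_chain.simps)
      qed
      then show ?thesis using True by simp
    qed simp
  qed
  also have "\<dots> = (\<integral>\<^sup>+ w. \<integral>\<^sup>+ w'. indicator J (X y w n, w') \<partial>N \<partial>N)"
    by (rule markov[OF J_ind_meas])
  also have "\<dots> = (\<integral>\<^sup>+ w. H (X y w n) \<partial>N)"
    unfolding H_def ..
  finally show ?thesis .
qed

lemma J_shift:
  assumes "(y, w) \<in> J" shows "(X y w n, \<lambda>i. w (i + n)) \<in> J"
proof -
  have h: "\<forall>t. X y w (Suc t) \<notin> A" using assms by (simp add: J_def del: path_chain.simps)
  have "\<forall>t. X (X y w n) (\<lambda>i. w (i + n)) (Suc t) \<notin> A"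
  proof
    fix t
    have "X (X y w n) (\<lambda>i. w (i + n)) (Suc t) = X y w (Suc (t + n))"
      using X_add[of y w "Suc t" n] by (simp only: add_Suc)
    then show "X (X y w n) (\<lambda>i. w (i + n)) (Suc t) \<notin> A" using h by metis
  qed
  then show ?thesis by (simp add: J_def del: path_chain.simps)
qed

lemma J_first: "(y, w) \<in> J \<Longrightarrow> X y w (Suc 0) \<notin> A"
  unfolding J_def by (metis (mono_tags, lifting) fst_conv mem_Collect_eq snd_conv)

lemma H_C:
  assumes z: "\<bar>z\<bar> \<le> R"
  shows "H z \<le> (SUP y. H y) * ennreal (1 - eps A R)"
proof -
  interpret NP: prob_space N by (rule prob_N)
  define Ms where "Ms = (SUP y. H y)"
  define J' where "J' = J \<inter> ((-A) \<times> UNIV)"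
  have J'_sets: "J' \<in> sets (borel \<Otimes>\<^sub>M N)"
  proof -
    have "-A \<in> sets borel" using A by (simp add: borel_comp)
    moreover have "UNIV \<in> sets N" using sets.top[of N] by simp
    ultimately have "(-A) \<times> UNIV \<in> sets (borel \<Otimes>\<^sub>M N)" by (rule pair_measureI)
    then show ?thesis unfolding J'_def using J_sets by (rule sets.Int[rotated])
  qed
  have "H z \<le> (\<integral>\<^sup>+ w. indicator J' (X z w (Suc 0), \<lambda>i. w (i + Suc 0)) \<partial>N)"
    unfolding H_def
  proof (intro nn_integral_mono)
    fix w
    show "indicator J (z, w) \<le> (indicator J' (X z w (Suc 0), \<lambda>i. w (i + Suc 0)) :: ennreal)"
    proof (cases "(z, w) \<in> J")
      case True
      then have "(X z w (Suc 0), \<lambda>i. w (i + Suc 0)) \<in> J'"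
        using J_shift[OF True, of "Suc 0"] J_first[OF True] by (simp add: J'_def del: path_chain.simps)
      then show ?thesis using True by simp
    qed simp
  qed
  also have "\<dots> = (\<integral>\<^sup>+ w. \<integral>\<^sup>+ w'. indicator J' (X z w (Suc 0), w') \<partial>N \<partial>N)"
    by (rule markov[OF borel_measurable_indicator[OF J'_sets]])
  also have "\<dots> = (\<integral>\<^sup>+ w. indicator (-A) (X z w (Suc 0)) * H (X z w (Suc 0)) \<partial>N)"
  proof (intro nn_integral_cong)
    fix w
    define x where "x = X z w (Suc 0)"
    have mJ: "(\<lambda>w'. indicator J (x, w') :: ennreal) \<in> borel_measurable N"
    proof -
      have xs: "x \<in> space borel" by simp
      show ?thesis using measurable_Pair2[OF J_ind_meas xs] .
    qed
    have "(\<integral>\<^sup>+ w'. indicator J' (x, w') \<partial>N) = (\<integral>\<^sup>+ w'. indicator (-A) x * indicator J (x, w') \<partial>N)"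
      by (intro nn_integral_cong) (auto simp: J'_def indicator_def)
    also have "\<dots> = indicator (-A) x * H x"
      unfolding H_def by (rule nn_integral_cmult[OF mJ])
    finally show "(\<integral>\<^sup>+ w'. indicator J' (X z w (Suc 0), w') \<partial>N) = indicator (-A) (X z w (Suc 0)) * H (X z w (Suc 0))"
      unfolding x_def .
  qed
  also have "\<dots> \<le> (\<integral>\<^sup>+ w. Ms * indicator {w. X z w (Suc 0) \<notin> A} w \<partial>N)"
  proof (intro nn_integral_mono)
    fix w
    have "H (X z w (Suc 0)) \<le> Ms" unfolding Ms_def by (rule SUP_upper) simp
    then show "indicator (-A) (X z w (Suc 0)) * H (X z w (Suc 0)) \<le> Ms * indicator {w. X z w (Suc 0) \<notin> A} w"
      by (simp add: indicator_def mult.commute)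
  qed
  also have "\<dots> = Ms * emeasure N {w. X z w (Suc 0) \<notin> A}"
  proof -
    have S1: "{w. X z w (Suc 0) \<in> A} \<in> sets N"
      using measurable_sets[OF meas_X1 A, of z "Suc 0"] by (simp add: vimage_def)
    then have "space N - {w. X z w (Suc 0) \<in> A} \<in> sets N" by (rule sets.compl_sets)
    then have S: "{w. X z w (Suc 0) \<notin> A} \<in> sets N" by (simp add: set_diff_eq)
    show ?thesis by (rule nn_integral_cmult_indicator[OF S])
  qed
  also have "emeasure N {w. X z w (Suc 0) \<notin> A} \<le> ennreal (1 - eps A R)"
  proof -
    have S1: "{w. X z w (Suc 0) \<in> A} \<in> sets N"
      using measurable_sets[OF meas_X1 A, of z "Suc 0"] by (simp add: vimage_def)
    have "emeasure N {w. X z w (Suc 0) \<notin> A} = ennreal (NP.prob (space N - {w. X z w (Suc 0) \<in> A}))"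
      using NP.emeasure_eq_measure by (simp add: set_diff_eq)
    also have "\<dots> = ennreal (1 - NP.prob {w. X z w (Suc 0) \<in> A})"
      using NP.prob_compl[OF S1] by simp
    also have "\<dots> \<le> ennreal (1 - eps A R)"
      using hit1_lb[OF A Apos z] by (intro ennreal_leI) simp
    finally show ?thesis .
  qed
  finally show ?thesis unfolding Ms_def by (simp add: mult_left_mono)
qed

end
end

context csa begin

context
  fixes A :: "real set"
  assumes A: "A \<in> sets borel" and Apos: "0 < emeasure lborel (A \<inter> {0..1})"
begin

lemma H_zero: "H A y = 0"
proof -
  interpret NP: prob_space N by (rule prob_N)
  define Ms where "Ms = (SUP y. H A y)"
  define R0 where "R0 = 2 * (1 + s * m1 / c)"
  define e where "e = eps A R0"
  have smc: "0 \<le> s * m1 / c" using s_pos m1_nonneg c0 by simp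
  have R0: "0 < R0" unfolding R0_def using smc by simp
  have e: "0 < e" "e \<le> 1" unfolding e_def using eps_pos[OF A Apos] eps_le1[OF A Apos] R0 by auto
  have key: "H A y \<le> Ms * ennreal (1 - e/2)" for y
  proof -
    have "0 < 1 / (\<bar>y\<bar> + 1)" by simp
    from real_arch_pow_inv[OF this r_lt1] obtain n where n: "r^n < 1 / (\<bar>y\<bar> + 1)" by blast
    have "r^n * (\<bar>y\<bar> + 1) < 1" using n by (simp add: field_simps)
    moreover have "r^n * \<bar>y\<bar> \<le> r^n * (\<bar>y\<bar> + 1)" using r_pos by (intro mult_left_mono) auto
    ultimately have rn: "r^n * \<bar>y\<bar> \<le> 1" by linarith
    define Out where "Out = {w. R0 < \<bar>X y w n\<bar>}"
    have Out_sets: "Out \<in> sets N"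
      using measurable_sets[OF meas_abs_X, of "{R0<..}" y n] by (simp add: Out_def vimage_def)
    have eOut: "emeasure N Out \<le> ennreal (1/2)"
    proof -
      have "emeasure N Out \<le> ennreal ((r^n * \<bar>y\<bar> + s * m1 / c) / R0)"
        unfolding Out_def by (rule tail_bound[OF R0])
      also have "\<dots> \<le> ennreal (1/2)"
      proof (intro ennreal_leI)
        have "R0 / 2 = 1 + s * m1 / c" unfolding R0_def by simp
        then have "r^n * \<bar>y\<bar> + s * m1 / c \<le> R0 / 2" using rn by linarith
        then show "(r^n * \<bar>y\<bar> + s * m1 / c) / R0 \<le> 1/2" using R0 by (simp add: field_simps)
      qed
      finally show ?thesis .
    qed
    have pw: "H A (X y w n) \<le> Ms * ennreal (1 - e) + Ms * ennreal e * indicator Out w" for w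
    proof (cases "w \<in> Out")
      case True
      have "H A (X y w n) \<le> Ms" unfolding Ms_def by (rule SUP_upper) simp
      also have "Ms = Ms * (ennreal (1 - e) + ennreal e)"
        using e by (simp add: ennreal_plus[symmetric] del: ennreal_plus)
      also have "\<dots> = Ms * ennreal (1 - e) + Ms * ennreal e * indicator Out w"
        using True by (simp add: distrib_left)
      finally show ?thesis .
    next
      case False
      then have "\<bar>X y w n\<bar> \<le> R0" by (simp add: Out_def)
      then have "H A (X y w n) \<le> Ms * ennreal (1 - e)"
        unfolding Ms_def e_def by (rule H_C[OF A Apos])
      then show ?thesis by (simp add: add_increasing2)
    qed
    have m1: "(\<lambda>w. Ms * ennreal e * indicator Out w) \<in> borel_measurable N"
      by (rule borel_measurable_times_ennreal[OF borel_measurable_const borel_measurable_indicator[OF Out_sets]])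
    have "H A y \<le> (\<integral>\<^sup>+ w. H A (X y w n) \<partial>N)" by (rule H_step[OF A Apos])
    also have "\<dots> \<le> (\<integral>\<^sup>+ w. Ms * ennreal (1 - e) + Ms * ennreal e * indicator Out w \<partial>N)"
      by (intro nn_integral_mono pw)
    also have "\<dots> = Ms * ennreal (1 - e) + Ms * ennreal e * emeasure N Out"
    proof -
      have "(\<integral>\<^sup>+ w. Ms * ennreal (1 - e) \<partial>N) = Ms * ennreal (1 - e)"
        using NP.emeasure_space_1 by (subst nn_integral_const) simp
      moreover have "(\<integral>\<^sup>+ w. Ms * ennreal e * indicator Out w \<partial>N) = Ms * ennreal e * emeasure N Out"
        by (rule nn_integral_cmult_indicator[OF Out_sets])
      ultimately show ?thesis
        by (subst nn_integral_add[OF borel_measurable_const m1]) simp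
    qed
    also have "\<dots> \<le> Ms * ennreal (1 - e) + Ms * ennreal e * ennreal (1/2)"
      by (intro add_left_mono mult_left_mono eOut) auto
    also have "\<dots> = Ms * ennreal (1 - e/2)"
    proof -
      have "ennreal e * ennreal (1/2) = ennreal (e/2)"
        using e by (subst ennreal_mult[symmetric]) auto
      moreover have "ennreal (1 - e) + ennreal (e/2) = ennreal (1 - e + e/2)"
        using e by (intro ennreal_plus[symmetric]) auto
      moreover have "1 - e + e/2 = 1 - e/2" by simp
      ultimately have "ennreal (1 - e) + ennreal e * ennreal (1/2) = ennreal (1 - e/2)" by simp
      then show ?thesis by (simp add: distrib_left[symmetric] mult.assoc)
    qed
    finally show ?thesis .
  qed
  have MsMs: "Ms \<le> Ms * ennreal (1 - e/2)"
    unfolding Ms_def by (rule SUP_least) (use key in \<open>simp add: Ms_def\<close>)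
  have Ms1: "Ms \<le> 1" unfolding Ms_def by (rule SUP_least) (rule H_le1[OF A Apos])
  then obtain m where m: "Ms = ennreal m" "0 \<le> m" by (cases Ms) (auto simp: top_unique)
  have "ennreal m * ennreal (1 - e/2) = ennreal (m * (1 - e/2))"
    using m e by (intro ennreal_mult[symmetric]) auto
  then have "ennreal m \<le> ennreal (m * (1 - e/2))"
    using MsMs m by simp
  then have "m \<le> m * (1 - e/2)" using m e by (subst (asm) ennreal_le_iff) auto
  then have "m * e \<le> 0" by (simp add: algebra_simps)
  then have "m = 0" using m(2) e(1) by (simp add: mult_le_0_iff)
  then have "Ms = 0" using m by simp
  moreover have "H A y \<le> Ms" unfolding Ms_def by (rule SUP_upper) simp
  ultimately show ?thesis by simp
qed

lemma io: "AE w in N. (\<exists>\<^sub>\<infinity>t. X x w t \<in> A)"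
proof -
  define E where "E m = (\<lambda>w. (X x w m, \<lambda>i. w (i + m))) -` J A \<inter> space N" for m
  have mP: "(\<lambda>w. (X x w m, \<lambda>i. w (i + m))) \<in> measurable N (borel \<Otimes>\<^sub>M N)" for m
    by (rule measurable_Pair[OF meas_X1 meas_shift])
  have Es: "E m \<in> sets N" for m
    unfolding E_def by (rule measurable_sets[OF mP J_sets[OF A Apos]])
  have "emeasure N (E m) = 0" for m
  proof -
    have "emeasure N (E m) = (\<integral>\<^sup>+ w. indicator (E m) w \<partial>N)" using Es by simp
    also have "\<dots> = (\<integral>\<^sup>+ w. indicator (J A) (X x w m, \<lambda>i. w (i + m)) \<partial>N)"
      by (intro nn_integral_cong) (simp add: E_def indicator_def)
    also have "\<dots> = (\<integral>\<^sup>+ w. \<integral>\<^sup>+ w'. indicator (J A) (X x w m, w') \<partial>N \<partial>N)"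
      by (rule markov[OF J_ind_meas[OF A Apos]])
    also have "\<dots> = (\<integral>\<^sup>+ w. H A (X x w m) \<partial>N)"
      unfolding H_def[OF A Apos] ..
    also have "\<dots> = 0" by (simp add: H_zero)
    finally show ?thesis .
  qed
  then have nul: "(\<Union>m. E m) \<in> null_sets N"
    using Es by (intro null_sets_UN null_setsI) auto
  show ?thesis
  proof (rule AE_I'[OF nul], safe)
    fix w assume "\<not> (\<exists>\<^sub>\<infinity>t. X x w t \<in> A)"
    then obtain m where m: "\<forall>n>m. X x w n \<notin> A" unfolding INFM_nat by blast
    have "\<forall>t. X (X x w m) (\<lambda>i. w (i + m)) (Suc t) \<notin> A"
    proof
      fix t
      have "X (X x w m) (\<lambda>i. w (i + m)) (Suc t) = X x w (Suc t + m)"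
        using X_add[of x w "Suc t" m] by (rule sym)
      moreover have "X x w (Suc t + m) \<notin> A" using m[rule_format, of "Suc t + m"] by simp
      ultimately show "X (X x w m) (\<lambda>i. w (i + m)) (Suc t) \<notin> A" by (simp only:) simp
    qed
    then have "(X x w m, \<lambda>i. w (i + m)) \<in> J A" by (simp add: J_def[OF A Apos] del: path_chain.simps)
    then show "w \<in> (\<Union>m. E m)" by (auto simp: E_def)
  qed
qed

end
end

context csa begin

definition G :: "(nat \<Rightarrow> real) \<Rightarrow> bool" where
  "G w \<longleftrightarrow> summable (\<lambda>k. r^k * (w k)^2)"

definition Y :: "(nat \<Rightarrow> real) \<Rightarrow> real" where
  "Y w = (\<Sum>k. s * r^k * w k)"

lemma meas_Y: "Y \<in> borel_measurable N"
proof -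
  have "(\<lambda>w. \<Sum>k. s * r^k * w k) \<in> borel_measurable N"
    by (rule borel_measurable_suminf) (rule borel_measurable_times[OF borel_measurable_const meas_comp])
  then show ?thesis unfolding Y_def[abs_def] .
qed

lemma meas_rk: "(\<lambda>z::real. ennreal (a * z^2)) \<in> borel_measurable borel" by measurable

lemma geo: "(\<lambda>k. r^k) sums (1/c)"
  using geometric_sums[of r] r_pos r_lt1 by simp

lemma AE_G: "AE w in N. G w"
proof -
  have mk: "(\<lambda>w. ennreal (r^k * (w k)^2)) \<in> borel_measurable N" for k
    using measurable_compose[OF meas_comp meas_rk] .
  have "(\<integral>\<^sup>+ w. (\<Sum>k. ennreal (r^k * (w k)^2)) \<partial>N) = (\<Sum>k. \<integral>\<^sup>+ w. ennreal (r^k * (w k)^2) \<partial>N)"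
    by (rule nn_integral_suminf[OF mk])
  also have "\<dots> = (\<Sum>k. ennreal (r^k) * M2)"
  proof (intro suminf_cong)
    fix k
    have "(\<integral>\<^sup>+ w. ennreal (r^k * (w k)^2) \<partial>N) = (\<integral>\<^sup>+ w. ennreal (r^k) * ennreal ((w k)^2) \<partial>N)"
      using r_pos by (intro nn_integral_cong) (simp add: ennreal_mult)
    also have "\<dots> = ennreal (r^k) * (\<integral>\<^sup>+ w. ennreal ((w k)^2) \<partial>N)"
      by (rule nn_integral_cmult[OF measurable_compose[OF meas_comp meas_sq_enn]])
    also have "(\<integral>\<^sup>+ w. ennreal ((w k)^2) \<partial>N) = M2"
      unfolding M2_def by (rule N_component[OF meas_sq_enn])
    finally show "(\<integral>\<^sup>+ w. ennreal (r^k * (w k)^2) \<partial>N) = ennreal (r^k) * M2" .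
  qed
  also have "\<dots> = (\<Sum>k. ennreal (r^k)) * M2"
    by (simp add: mult.commute)
  also have "(\<Sum>k. ennreal (r^k)) = ennreal (1/c)"
    using r_pos by (intro suminf_ennreal_eq geo) simp
  finally have fin: "(\<integral>\<^sup>+ w. (\<Sum>k. ennreal (r^k * (w k)^2)) \<partial>N) \<noteq> \<infinity>"
    using M2_fin by (simp add: ennreal_mult_eq_top_iff)
  have mS: "(\<lambda>w. \<Sum>k. ennreal (r^k * (w k)^2)) \<in> borel_measurable N"
    by (rule borel_measurable_suminf_order[OF mk])
  show ?thesis
    using nn_integral_noteq_infinite[OF mS fin]
  proof (rule AE_mp, intro AE_I2 impI)
    fix w assume "(\<Sum>k. ennreal (r^k * (w k)^2)) \<noteq> \<infinity>"
    then show "G w" unfolding G_def using r_pos by (intro summable_suminf_not_top) auto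
  qed
qed

lemma G_summable:
  assumes "G w" shows "summable (\<lambda>k. s * r^k * w k)"
proof (rule summable_comparison_test)
  show "\<exists>N. \<forall>n\<ge>N. norm (s * r^n * w n) \<le> s * r^n + s * (r^n * (w n)^2)"
  proof (intro exI allI impI)
    fix n :: nat
    have "\<bar>w n\<bar> \<le> 1 + (w n)^2"
    proof (cases "\<bar>w n\<bar> \<le> 1")
      case True then show ?thesis by (simp add: add_increasing2)
    next
      case False then have "\<bar>w n\<bar> * 1 \<le> \<bar>w n\<bar> * \<bar>w n\<bar>" by (intro mult_left_mono) auto
      then show ?thesis by (simp add: power2_eq_square)
    qed
    then have "(s * r^n) * \<bar>w n\<bar> \<le> (s * r^n) * (1 + (w n)^2)"
      using s_pos r_pos by (intro mult_left_mono) auto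
    then show "norm (s * r^n * w n) \<le> s * r^n + s * (r^n * (w n)^2)"
      using s_pos r_pos by (simp add: abs_mult algebra_simps)
  qed
  show "summable (\<lambda>n. s * r^n + s * (r^n * (w n)^2))"
    using assms unfolding G_def
    by (intro summable_add summable_mult sums_summable[OF geo])
qed

lemma Y_rec:
  assumes "G w" shows "Y (case_nat a w) = s * a + r * Y w"
proof -
  have "(\<lambda>k. s * r^k * w k) sums Y w" unfolding Y_def using G_summable[OF assms] by (rule summable_sums)
  then have "(\<lambda>k. r * (s * r^k * w k)) sums (r * Y w)" by (rule sums_mult)
  moreover have "(\<lambda>k. r * (s * r^k * w k)) = (\<lambda>k. s * r^(Suc k) * case_nat a w (Suc k))"
    by (simp add: mult_ac)
  ultimately have "(\<lambda>k. s * r^(Suc k) * case_nat a w (Suc k)) sums (r * Y w)" by simp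
  then have "(\<lambda>k. s * r^k * case_nat a w k) sums (r * Y w + s * a)"
    by (subst (asm) sums_Suc_iff) simp
  then show ?thesis unfolding Y_def by (simp add: sums_unique[symmetric])
qed

lemma Y_sq:
  assumes "G w" shows "(Y w)^2 \<le> (s^2 / c) * (\<Sum>k. r^k * (w k)^2)"
proof -
  define T where "T = (\<Sum>k. r^k * (w k)^2)"
  define q where "q = sqrt r"
  have q: "q * q = r" "0 \<le> q" unfolding q_def using r_pos by auto
  have qk: "q^k * q^k = r^k" for k by (metis q(1) power_mult_distrib)
  have lim: "(\<lambda>n. (\<Sum>k<n. s * r^k * w k)^2) \<longlonglongrightarrow> (Y w)^2"
    unfolding Y_def using summable_LIMSEQ[OF G_summable[OF assms]] by (intro tendsto_power)
  show ?thesis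
  proof (rule LIMSEQ_le_const2[OF lim], intro exI allI impI)
    fix n :: nat
    have "(\<Sum>k<n. s * r^k * w k)^2 = (\<Sum>k<n. (s * q^k) * (q^k * w k))^2"
      by (intro arg_cong[where f="\<lambda>x. x^2"] sum.cong) (auto simp: qk[symmetric] mult_ac)
    also have "\<dots> \<le> (\<Sum>k<n. (s * q^k)^2) * (\<Sum>k<n. (q^k * w k)^2)"
      by (rule Cauchy_Schwarz_ineq_sum)
    also have "(\<Sum>k<n. (s * q^k)^2) = s^2 * (\<Sum>k<n. r^k)"
    proof -
      have "(s * q^k)^2 = s^2 * r^k" for k
      proof -
        have "(s * q^k)^2 = s^2 * (q^k * q^k)" by (simp only: power2_eq_square mult_ac)
        then show ?thesis by (simp only: qk)
      qed
      then show ?thesis by (simp add: sum_distrib_left del: real_sqrt_mult)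
    qed
    also have "(\<Sum>k<n. (q^k * w k)^2) = (\<Sum>k<n. r^k * (w k)^2)"
      by (intro sum.cong) (auto simp: power_mult_distrib power2_eq_square qk[symmetric] mult_ac)
    also have "s^2 * (\<Sum>k<n. r^k) * (\<Sum>k<n. r^k * (w k)^2) \<le> s^2 * (1/c) * T"
    proof (intro mult_mono mult_left_mono)
      show "(\<Sum>k<n. r^k) \<le> 1/c"
        using sum_le_suminf[OF sums_summable[OF geo], of "{..<n}"] sums_unique[OF geo] r_pos by simp
      show "(\<Sum>k<n. r^k * (w k)^2) \<le> T"
        unfolding T_def using assms unfolding G_def using r_pos by (intro sum_le_suminf) (auto intro!: mult_nonneg_nonneg)
    qed (use r_pos c0 in \<open>auto intro!: sum_nonneg mult_nonneg_nonneg\<close>)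
    finally show "(\<Sum>k<n. s * r^k * w k)^2 \<le> (s^2 / c) * (\<Sum>k. r^k * (w k)^2)"
      unfolding T_def by simp
  qed
qed

end

context csa begin

lemma meas_aff_mu: "(\<lambda>a. u + v * a) \<in> measurable \<mu> borel"
  unfolding measurable_cong_sets[OF sets_min_normal refl] by (rule meas_aff)

lemma kernel_eq:
  assumes B: "B \<in> sets borel"
  shows "emeasure (path_kernel c lam x) B = (\<integral>\<^sup>+ a. indicator B (r*x + s*a) \<partial>\<mu>)"
proof -
  have Bs: "B \<in> sets (path_kernel c lam x)" using B by (simp add: path_kernel_def)
  have "emeasure (path_kernel c lam x) B = (\<integral>\<^sup>+ y. indicator B y \<partial>path_kernel c lam x)"
    by (rule nn_integral_indicator[symmetric, OF Bs])
  also have "\<dots> = (\<integral>\<^sup>+ a. indicator B (r*x + s*a) \<partial>\<mu>)"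
    unfolding path_kernel_def
  proof (rule nn_integral_distr[OF meas_aff_mu])
    show "indicator B \<in> borel_measurable (distr \<mu> borel (\<lambda>a. r * x + s * a))"
      unfolding measurable_cong_sets[OF sets_distr refl] by (rule borel_measurable_indicator[OF B])
  qed
  finally show ?thesis .
qed

definition "\<pi>m = distr N borel Y"

lemma sf_mu: "sigma_finite_measure \<mu>"
  by (rule prob_space_imp_sigma_finite[OF prob_min_normal])

lemma invariant: "is_invariant_prob c lam \<pi>m"
  unfolding is_invariant_prob_def
proof (intro conjI ballI)
  show "prob_space \<pi>m" unfolding \<pi>m_def by (rule prob_space.prob_space_distr[OF prob_N meas_Y])
  show "sets \<pi>m = sets borel" unfolding \<pi>m_def by simp
  fix B :: "real set" assume B: "B \<in> sets borel"
  interpret PS: pair_sigma_finite \<mu> N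
    by (intro pair_sigma_finite.intro sf_mu prob_space_imp_sigma_finite prob_N)
  have mIY: "(\<lambda>w. indicator B (Y w) :: ennreal) \<in> borel_measurable N"
    using measurable_compose[OF meas_Y borel_measurable_indicator[OF B]] .
  have mfst: "fst \<in> borel_measurable (\<mu> \<Otimes>\<^sub>M N)"
    using measurable_fst[of \<mu> N] unfolding measurable_cong_sets[OF refl sets_min_normal] .
  have mYs: "(\<lambda>p. Y (snd p)) \<in> borel_measurable (\<mu> \<Otimes>\<^sub>M N)"
    using measurable_compose[OF measurable_snd meas_Y] .
  have mAff: "(\<lambda>p. r * Y (snd p) + s * fst p) \<in> borel_measurable (\<mu> \<Otimes>\<^sub>M N)"
    by (rule borel_measurable_add[OF borel_measurable_times[OF borel_measurable_const mYs]
          borel_measurable_times[OF borel_measurable_const mfst]])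
  have mF: "(\<lambda>p. indicator B (r * Y (snd p) + s * fst p) :: ennreal) \<in> borel_measurable (\<mu> \<Otimes>\<^sub>M N)"
    using measurable_compose[OF mAff borel_measurable_indicator[OF B]] .
  have mK2: "(\<lambda>p. indicator B (r * fst p + s * snd p) :: ennreal) \<in> borel_measurable (borel \<Otimes>\<^sub>M \<mu>)"
  proof -
    have m2: "snd \<in> borel_measurable (borel \<Otimes>\<^sub>M \<mu>)"
      using measurable_snd[of borel \<mu>] unfolding measurable_cong_sets[OF refl sets_min_normal] .
    have "(\<lambda>p. r * fst p + s * snd p) \<in> borel_measurable (borel \<Otimes>\<^sub>M \<mu>)"
      by (rule borel_measurable_add[OF borel_measurable_times[OF borel_measurable_const measurable_fst]
          borel_measurable_times[OF borel_measurable_const m2]])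
    then show ?thesis using measurable_compose[OF _ borel_measurable_indicator[OF B]] by blast
  qed
  have mK: "(\<lambda>x. emeasure (path_kernel c lam x) B) \<in> borel_measurable borel"
  proof -
    have eq: "(\<lambda>(x, a). indicator B (r*x + s*a) :: ennreal) = (\<lambda>p. indicator B (r * fst p + s * snd p))"
      by (auto simp: fun_eq_iff)
    have "(\<lambda>(x, a). indicator B (r*x + s*a) :: ennreal) \<in> borel_measurable (borel \<Otimes>\<^sub>M \<mu>)"
      unfolding eq by (rule mK2)
    from sigma_finite_measure.borel_measurable_nn_integral[OF sf_mu this]
    have "(\<lambda>x. \<integral>\<^sup>+ a. indicator B (r*x + s*a) \<partial>\<mu>) \<in> borel_measurable borel" .
    then show ?thesis by (subst kernel_eq[OF B])
  qed
  have Bs: "B \<in> sets \<pi>m" using B by (simp add: \<pi>m_def)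
  have "emeasure \<pi>m B = (\<integral>\<^sup>+ x. indicator B x \<partial>\<pi>m)"
    by (rule nn_integral_indicator[symmetric, OF Bs])
  also have "\<dots> = (\<integral>\<^sup>+ w. indicator B (Y w) \<partial>N)"
    unfolding \<pi>m_def
  proof (rule nn_integral_distr[OF meas_Y])
    show "indicator B \<in> borel_measurable (distr N borel Y)"
      unfolding measurable_cong_sets[OF sets_distr refl] by (rule borel_measurable_indicator[OF B])
  qed
  also have "\<dots> = (\<integral>\<^sup>+ a. \<integral>\<^sup>+ w. indicator B (Y (case_nat a w)) \<partial>N \<partial>\<mu>)"
    by (rule N_iter[OF mIY])
  also have "\<dots> = (\<integral>\<^sup>+ a. \<integral>\<^sup>+ w. indicator B (r * Y w + s * a) \<partial>N \<partial>\<mu>)"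
  proof (rule nn_integral_cong)
    fix a
    have "AE w in N. indicator B (Y (case_nat a w)) = (indicator B (r * Y w + s * a) :: ennreal)"
      using AE_G by (rule AE_mp) (intro AE_I2 impI, simp add: Y_rec add.commute)
    then show "(\<integral>\<^sup>+ w. indicator B (Y (case_nat a w)) \<partial>N) = (\<integral>\<^sup>+ w. indicator B (r * Y w + s * a) \<partial>N)"
      by (rule nn_integral_cong_AE)
  qed
  also have "\<dots> = (\<integral>\<^sup>+ w. \<integral>\<^sup>+ a. indicator B (r * Y w + s * a) \<partial>\<mu> \<partial>N)"
  proof -
    have eq: "(\<lambda>(a, w). indicator B (r * Y w + s * a) :: ennreal) = (\<lambda>p. indicator B (r * Y (snd p) + s * fst p))"
      by (auto simp: fun_eq_iff)
    have "(\<lambda>(a, w). indicator B (r * Y w + s * a) :: ennreal) \<in> borel_measurable (\<mu> \<Otimes>\<^sub>M N)"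
      unfolding eq by (rule mF)
    from PS.Fubini'[OF this] show ?thesis by (rule sym)
  qed
  also have "\<dots> = (\<integral>\<^sup>+ w. emeasure (path_kernel c lam (Y w)) B \<partial>N)"
    by (simp add: kernel_eq[OF B])
  also have "\<dots> = (\<integral>\<^sup>+ x. emeasure (path_kernel c lam x) B \<partial>\<pi>m)"
    unfolding \<pi>m_def
  proof (rule nn_integral_distr[OF meas_Y, symmetric])
    show "(\<lambda>x. emeasure (path_kernel c lam x) B) \<in> borel_measurable (distr N borel Y)"
      unfolding measurable_cong_sets[OF sets_distr refl] by (rule mK)
  qed
  finally show "emeasure \<pi>m B = (\<integral>\<^sup>+ x. emeasure (path_kernel c lam x) B \<partial>\<pi>m)" .
qed

end

context csa begin

lemma S_int: "(\<integral>\<^sup>+ w. (\<Sum>k. ennreal (r^k * (w k)^2)) \<partial>N) < \<infinity>"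
proof -
  have mk: "(\<lambda>w. ennreal (r^k * (w k)^2)) \<in> borel_measurable N" for k
    using measurable_compose[OF meas_comp meas_rk] .
  have "(\<integral>\<^sup>+ w. (\<Sum>k. ennreal (r^k * (w k)^2)) \<partial>N) = (\<Sum>k. \<integral>\<^sup>+ w. ennreal (r^k * (w k)^2) \<partial>N)"
    by (rule nn_integral_suminf[OF mk])
  also have "\<dots> = (\<Sum>k. ennreal (r^k) * M2)"
  proof (intro suminf_cong)
    fix k
    have "(\<integral>\<^sup>+ w. ennreal (r^k * (w k)^2) \<partial>N) = (\<integral>\<^sup>+ w. ennreal (r^k) * ennreal ((w k)^2) \<partial>N)"
      using r_pos by (intro nn_integral_cong) (simp add: ennreal_mult)
    also have "\<dots> = ennreal (r^k) * (\<integral>\<^sup>+ w. ennreal ((w k)^2) \<partial>N)"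
      by (rule nn_integral_cmult[OF measurable_compose[OF meas_comp meas_sq_enn]])
    also have "(\<integral>\<^sup>+ w. ennreal ((w k)^2) \<partial>N) = M2"
      unfolding M2_def by (rule N_component[OF meas_sq_enn])
    finally show "(\<integral>\<^sup>+ w. ennreal (r^k * (w k)^2) \<partial>N) = ennreal (r^k) * M2" .
  qed
  also have "\<dots> = (\<Sum>k. ennreal (r^k)) * M2"
    by (simp add: mult.commute)
  also have "(\<Sum>k. ennreal (r^k)) = ennreal (1/c)"
    using r_pos by (intro suminf_ennreal_eq geo) simp
  finally show ?thesis
    using M2_fin by (simp add: ennreal_mult_less_top)
qed

lemma integrable_sq: "integrable \<pi>m (\<lambda>x. x^2)"
proof -
  have msq: "(\<lambda>x::real. x^2) \<in> borel_measurable borel" by measurable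
  have mYsq: "(\<lambda>w. (Y w)^2) \<in> borel_measurable N"
    using measurable_compose[OF meas_Y msq] .
  have mk: "(\<lambda>w. ennreal (r^k * (w k)^2)) \<in> borel_measurable N" for k
    using measurable_compose[OF meas_comp meas_rk] .
  have mS: "(\<lambda>w. \<Sum>k. ennreal (r^k * (w k)^2)) \<in> borel_measurable N"
    by (rule borel_measurable_suminf_order[OF mk])
  have "(\<integral>\<^sup>+ w. ennreal (norm ((Y w)^2)) \<partial>N) \<le> (\<integral>\<^sup>+ w. ennreal (s^2/c) * (\<Sum>k. ennreal (r^k * (w k)^2)) \<partial>N)"
  proof (rule nn_integral_mono_AE)
    show "AE w in N. ennreal (norm ((Y w)^2)) \<le> ennreal (s^2/c) * (\<Sum>k. ennreal (r^k * (w k)^2))"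
      using AE_G
    proof (rule AE_mp, intro AE_I2 impI)
      fix w assume g: "G w"
      have "(\<Sum>k. ennreal (r^k * (w k)^2)) = ennreal (\<Sum>k. r^k * (w k)^2)"
        using g r_pos unfolding G_def by (intro suminf_ennreal2) auto
      moreover have "ennreal (s^2/c) * ennreal (\<Sum>k. r^k * (w k)^2) = ennreal (s^2/c * (\<Sum>k. r^k * (w k)^2))"
        using g r_pos c0 unfolding G_def by (intro ennreal_mult[symmetric] suminf_nonneg) auto
      moreover have "norm ((Y w)^2) \<le> s^2/c * (\<Sum>k. r^k * (w k)^2)"
        using Y_sq[OF g] by simp
      ultimately show "ennreal (norm ((Y w)^2)) \<le> ennreal (s^2/c) * (\<Sum>k. ennreal (r^k * (w k)^2))"
        by (simp add: ennreal_leI)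
    qed
  qed
  also have "\<dots> = ennreal (s^2/c) * (\<integral>\<^sup>+ w. (\<Sum>k. ennreal (r^k * (w k)^2)) \<partial>N)"
    by (rule nn_integral_cmult[OF mS])
  also have "\<dots> < \<infinity>"
    using S_int by (simp add: ennreal_mult_less_top)
  finally have "integrable N (\<lambda>w. (Y w)^2)"
    by (intro integrableI_bounded mYsq)
  then show ?thesis
    unfolding \<pi>m_def by (subst integrable_distr_eq[OF meas_Y msq])
qed

end

theorem lemma13:
  fixes c d_sigma :: real and lam :: nat
  assumes "0 < c" and "c < 1" and "lam \<ge> 1" and "d_sigma > 0"
  shows "positive_harris_recurrent c lam \<and>
         (\<exists>\<mu>_path. is_invariant_prob c lam \<mu>_path \<and> integrable \<mu>_path (\<lambda>x. x ^ 2))"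
proof -
  interpret csa c lam using assms by unfold_locales auto
  define \<phi> where "\<phi> = density lborel (indicator {0..1::real})"
  have sets_phi: "sets \<phi> = sets borel" unfolding \<phi>_def by simp
  have phiA: "emeasure \<phi> A = emeasure lborel (A \<inter> {0..1})" if A: "A \<in> sets borel" for A
  proof -
    have "emeasure \<phi> A = (\<integral>\<^sup>+ x. indicator {0..1} x * indicator A x \<partial>lborel)"
      unfolding \<phi>_def using A by (intro emeasure_density) auto
    also have "\<dots> = (\<integral>\<^sup>+ x. indicator (A \<inter> {0..1}) x \<partial>lborel)"
      by (intro nn_integral_cong) (auto simp: indicator_def)
    also have "\<dots> = emeasure lborel (A \<inter> {0..1})"
      using A by (intro nn_integral_indicator) auto
    finally show ?thesis .
  qed
  have irr: "phi_irreducible c lam \<phi>"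
    unfolding phi_irreducible_def
  proof (intro conjI ballI impI allI)
    show "sets \<phi> = sets borel" by (rule sets_phi)
    have "emeasure \<phi> (space \<phi>) = emeasure lborel (UNIV \<inter> {0..1::real})"
      using phiA[of UNIV] by (simp add: \<phi>_def)
    then show "emeasure \<phi> (space \<phi>) \<noteq> 0" by simp
    fix A :: "real set" and x :: real
    assume A: "A \<in> sets borel" and pos: "0 < emeasure \<phi> A"
    have Apos: "0 < emeasure lborel (A \<inter> {0..1})" using pos phiA[OF A] by simp
    have "0 < eps A \<bar>x\<bar>" by (rule eps_pos[OF A Apos])
    also have "\<dots> \<le> measure N {w. X x w (Suc 0) \<in> A}" by (rule hit1_lb[OF A Apos]) simp
    finally show "\<exists>t\<ge>1. 0 < measure (noise_space lam) {w \<in> space (noise_space lam). path_chain c lam x w t \<in> A}"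
      by (intro exI[of _ "Suc 0"]) simp
  qed
  have harris: "positive_harris_recurrent c lam"
    unfolding positive_harris_recurrent_def
  proof (intro exI conjI ballI impI allI)
    show "phi_irreducible c lam \<phi>" by (rule irr)
    show "is_invariant_prob c lam \<pi>m" by (rule invariant)
    fix A :: "real set" and x :: real
    assume A: "A \<in> sets borel" and pos: "0 < emeasure \<phi> A"
    have Apos: "0 < emeasure lborel (A \<inter> {0..1})" using pos phiA[OF A] by simp
    show "AE w in noise_space lam. \<exists>\<^sub>\<infinity>t. path_chain c lam x w t \<in> A"
      by (rule io[OF A Apos])
  qed
  show ?thesis using harris invariant integrable_sq by blast
qed

end
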